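(* Let $\theta_1,\theta_2\in\mathbb{R}$ satisfy $\sin(\theta_1)\sin(\theta_2)>0$. Then the two-player two-strategy game with payoffs \[ G_1=\begin{bmatrix}\frac{1}{\sqrt2}\sin(\theta_1+\frac{\pi}{4})&\frac{1}{\sqrt2}\cos(\theta_1+\frac{\pi}{4})\\ -\frac{1}{\sqrt2}\sin(\theta_1+\frac{\pi}{4})&-\frac{1}{\sqrt2}\cos(\theta_1+\frac{\pi}{4})\end{bmatrix},\qquad G_2=\begin{bmatrix}\frac{1}{\sqrt2}\sin(\theta_2+\frac{\pi}{4})&-\frac{1}{\sqrt2}\sin(\theta_2+\frac{\pi}{4})\\ \frac{1}{\sqrt2}\cos(\theta_2+\frac{\pi}{4})&-\frac{1}{\sqrt2}\cos(\theta_2+\frac{\pi}{4})\end{bmatrix} \] (rows indexed by player 1's strategy $a_1\in\{A,B\}$, columns by player 2's strategy $a_2\in\{A,B\}$) is invariant-common-payoff.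
   Context: A two-player game $(G_1,G_2)$ is invariant-common-payoff if there exist scalars $s_1,s_2>0$ and functions $b_1$ (of $a_2$) and $b_2$ (of $a_1$) such that $\hat G_1(a)=s_1G_1(a)+b_1(a_2)$ and $\hat G_2(a)=s_2G_2(a)+b_2(a_1)$ satisfy $\hat G_1(a)=\hat G_2(a)$ for all joint strategies $a=(a_1,a_2)$. *)

theory Defs
  imports Complex_Main
begin

datatype strat = A | B

definition invariant_common_payoff ::
  "(strat \<times> strat \<Rightarrow> real) \<Rightarrow> (strat \<times> strat \<Rightarrow> real) \<Rightarrow> bool" where
  "invariant_common_payoff G1 G2 \<longleftrightarrow>
     (\<exists>s1 s2 :: real. \<exists>b1 b2 :: strat \<Rightarrow> real. s1 > 0 \<and> s2 > 0 \<and>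
        (\<forall>a1 a2. s1 * G1 (a1, a2) + b1 a2 = s2 * G2 (a1, a2) + b2 a1))"

definition game4_G1 :: "real \<Rightarrow> strat \<times> strat \<Rightarrow> real" where
  "game4_G1 th = (\<lambda>(a1, a2).
     (if a1 = A then 1 else -1) / sqrt 2 *
     (if a2 = A then sin (th + pi/4) else cos (th + pi/4)))"

definition game4_G2 :: "real \<Rightarrow> strat \<times> strat \<Rightarrow> real" where
  "game4_G2 th = (\<lambda>(a1, a2).
     (if a2 = A then 1 else -1) / sqrt 2 *
     (if a1 = A then sin (th + pi/4) else cos (th + pi/4)))"

end

theory Submission
  imports Defs
begin

lemma key: "(sin (t + pi/4) - cos (t + pi/4)) / sqrt 2 = sin t"
proof -
  have "sin (t + pi/4) - cos (t + pi/4) = sqrt 2 * sin t"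
    by (simp add: sin_add cos_add sin_45 cos_45 algebra_simps)
  then show ?thesis by simp
qed

lemma sepg:
  fixes r s1 s2 x1 y1 x2 y2 :: real
  assumes "s1*(x1-y1) = s2*(x2-y2)"
  shows "s1*((-1)/r*y1) - s2*((-1)/r*y2) = (s1*((-1)/r*x1) - s2*(1/r*y2)) - (s1*(1/r*x1) - s2*(1/r*x2)) + (s1*(1/r*y1) - s2*((-1)/r*x2))"
proof -
  have "s1*x1 - s1*y1 = s2*x2 - s2*y2" using assms by (simp add: algebra_simps)
  then show ?thesis
  proof (cases "r = 0")
    case False
    have e: "s1 * x1 + s2 * y2 = s1 * y1 + s2 * x2" using assms by (simp add: algebra_simps)
    have "r*r*r*2*(s1 * x1 + s2 * y2) = r*r*r*2*(s1 * y1 + s2 * x2)" using e by simp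
    with False show ?thesis by (simp add: field_simps)
  qed simp
qed

theorem mainTheorem4:
  fixes th1 th2 :: real
  assumes "sin th1 * sin th2 > 0"
  shows "invariant_common_payoff (game4_G1 th1) (game4_G2 th2)"
proof -
  define s1 where "s1 = \<bar>sin th2\<bar>"
  define s2 where "s2 = \<bar>sin th1\<bar>"
  have s1: "s1 > 0" and s2: "s2 > 0" using assms by (auto simp: s1_def s2_def)
  have eq: "s1 * sin th1 = s2 * sin th2"
    using assms unfolding s1_def s2_def
    by (cases "sin th1 \<ge> 0"; cases "sin th2 \<ge> 0") (auto simp: mult_less_0_iff zero_less_mult_iff)
  define M where "M = (\<lambda>a. s1 * game4_G1 th1 a - s2 * game4_G2 th2 a)"
  have k1: "(sin (th1 + pi/4) - cos (th1 + pi/4)) / sqrt 2 = sin th1" by (rule key)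
  have k2: "(sin (th2 + pi/4) - cos (th2 + pi/4)) / sqrt 2 = sin th2" by (rule key)
  let ?x1 = "sin (th1 + pi/4)" and ?y1 = "cos (th1 + pi/4)"
  let ?x2 = "sin (th2 + pi/4)" and ?y2 = "cos (th2 + pi/4)"
  have h: "s1*(?x1-?y1) = s2*(?x2-?y2)"
  proof -
    have "s1 * ((?x1 - ?y1) / sqrt 2) = s2 * ((?x2 - ?y2) / sqrt 2)"
      using eq k1 k2 by simp
    then show ?thesis by (simp add: field_simps)
  qed
  have BB: "M (B,B) = s1*((-1)/sqrt 2*?y1) - s2*((-1)/sqrt 2*?y2)"
    by (simp add: M_def game4_G1_def game4_G2_def)
  have BA: "M (B,A) = s1*((-1)/sqrt 2*?x1) - s2*(1/sqrt 2*?y2)"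
    by (simp add: M_def game4_G1_def game4_G2_def)
  have AA: "M (A,A) = s1*(1/sqrt 2*?x1) - s2*(1/sqrt 2*?x2)"
    by (simp add: M_def game4_G1_def game4_G2_def)
  have AB: "M (A,B) = s1*(1/sqrt 2*?y1) - s2*((-1)/sqrt 2*?x2)"
    by (simp add: M_def game4_G1_def game4_G2_def)
  have sep: "M (B,B) = M (B,A) - M (A,A) + M (A,B)"
    unfolding BB BA AA AB using sepg[OF h] .
  show ?thesis
    unfolding invariant_common_payoff_def
  proof (intro exI conjI allI)
    show "s1 > 0" "s2 > 0" by (fact s1, fact s2)
    fix a1 a2
    show "s1 * game4_G1 th1 (a1, a2) + (M (A,A) - M (A,a2))
        = s2 * game4_G2 th2 (a1, a2) + M (a1, A)"
      using sep unfolding M_def[symmetric]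
      by (cases a1; cases a2) (simp_all add: M_def algebra_simps)
  qed
qed

end
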